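(* In the homogeneous UAV Persistent Service model ($g_i=g$ for all $i$, $2g<f$), run HoRR with $M=N+\lceil \frac{c+2g}{f-2g}N\rceil$ UAVs and let $x=\frac{f-2g}{N}$. Label the locations $1,\dots,N$ so that the UAV placed at location $i$ at time $0$ is the one relieved at time $ix$. Then, for every $k\ge 1$, the UAV initially placed at location $i$ is instructed to go recharge for the $k$-th time at time $$t_i^k=\left(i+(k-1)N+(k-1)\left\lceil\frac{2g+c}{x}\right\rceil\right)x .$$
   Context: UAV Persistent Service model: single recharging station (RS), finite set $\mathcal N$ of $N$ aerial locations, identical UAVs with maximum flight time $f>0$ on a full battery and recharge/battery-swap time $c\ge0$ at the RS; flying between RS and any location takes $g>0$ time units (homogeneous case), with $2g<f$. A UAV covers a location while it is present there. HoRR schedule: with $x=\frac{f-2g}{N}$, at time $0$ one fully charged UAV is at each location and the remaining (backup) UAVs are fully charged at the RS. For each $k=1,2,\dots$, a fully charged backup departs the RS at time $kx-g$ and at time $kx$ replaces the serving UAV with least remaining energy (ties broken arbitrarily); the relieved UAV ("instructed to recharge" at time $kx$) flies back to the RS (arriving at $kx+g$), recharges for $c$ time units, and then becomes a backup. Backups are dispatched in the order in which they became ready, so a UAV ready at the RS at time $s$ performs the first replacement at a time $jx$ ($j\in\mathbb N$) with $jx\ge s+g$ not already assigned to an earlier-ready backup. *)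

theory Defs
  imports Main Complex_Main
begin

text \<open>
  UAVs are the naturals 0..<M; UAVs 0..<N are the ones initially serving at the
  N locations (fully charged at time 0), UAVs N..<M are the initial backups
  (fully charged at the RS).  Replacement slot j (j >= 1) happens at time j*x,
  x = (f - 2g)/N.  A run is described by two functions:
  rel j  = the UAV relieved (instructed to recharge) at time j*x,
  disp j = the backup that replaces it at time j*x (departing the RS at j*x - g).
\<close>

definition hx :: "nat \<Rightarrow> real \<Rightarrow> real \<Rightarrow> real" where
  "hx N f g = (f - 2 * g) / real N"

text \<open>Serving UAVs after the replacements at slots 1..j (so before slot j+1).\<close>
fun srv :: "nat \<Rightarrow> (nat \<Rightarrow> nat) \<Rightarrow> (nat \<Rightarrow> nat) \<Rightarrow> nat \<Rightarrow> nat set" where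
  "srv N rel disp 0 = {0..<N}"
| "srv N rel disp (Suc j) = insert (disp (Suc j)) (srv N rel disp j - {rel (Suc j)})"

text \<open>Remaining energy at time j*x of a UAV that is serving just before slot j:
  a UAV last placed at slot m arrived with energy f - g at time m*x;
  an initially serving UAV that was never dispatched had energy f at time 0.\<close>
definition energy :: "real \<Rightarrow> real \<Rightarrow> real \<Rightarrow> (nat \<Rightarrow> nat) \<Rightarrow> nat \<Rightarrow> nat \<Rightarrow> real" where
  "energy f g x disp j u =
     (let D = {m. 1 \<le> m \<and> m < j \<and> disp m = u} in
      if D = {} then f - real j * x
      else f - g - real (j - Max D) * x)"

text \<open>Time at which a UAV at the RS (just before slot j) is fully recharged and ready:
  None encodes the initial backups, which are ready from the start (earlier than any
  recharged UAV); a UAV last relieved at slot r is ready at r*x + g + c.\<close>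
definition ready :: "real \<Rightarrow> real \<Rightarrow> real \<Rightarrow> (nat \<Rightarrow> nat) \<Rightarrow> nat \<Rightarrow> nat \<Rightarrow> real option" where
  "ready g c x rel j u =
     (let R = {r. 1 \<le> r \<and> r < j \<and> rel r = u} in
      if R = {} then None else Some (real (Max R) * x + g + c))"

definition ready_le :: "real option \<Rightarrow> real option \<Rightarrow> bool" where
  "ready_le a b = (case a of None \<Rightarrow> True
                   | Some s \<Rightarrow> (case b of None \<Rightarrow> False | Some s' \<Rightarrow> s \<le> s'))"

definition avail :: "nat \<Rightarrow> nat \<Rightarrow> real \<Rightarrow> real \<Rightarrow> real \<Rightarrow> (nat \<Rightarrow> nat) \<Rightarrow> (nat \<Rightarrow> nat) \<Rightarrow> nat \<Rightarrow> nat \<Rightarrow> bool" where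
  "avail N M g c x rel disp j u \<longleftrightarrow>
     u < M \<and> u \<notin> srv N rel disp (j - 1) \<and>
     (case ready g c x rel j u of None \<Rightarrow> True | Some s \<Rightarrow> s + g \<le> real j * x)"

text \<open>A run of HoRR with M UAVs (ties broken arbitrarily): at each slot j >= 1 the
  serving UAV with least remaining energy is relieved, and it is replaced by the
  earliest-ready eligible backup (backups dispatched in order of readiness).\<close>
definition horr_run :: "nat \<Rightarrow> nat \<Rightarrow> real \<Rightarrow> real \<Rightarrow> real \<Rightarrow> (nat \<Rightarrow> nat) \<Rightarrow> (nat \<Rightarrow> nat) \<Rightarrow> bool" where
  "horr_run N M f g c rel disp \<longleftrightarrow>
     (let x = hx N f g in
      \<forall>j\<ge>1.
        rel j \<in> srv N rel disp (j - 1) \<and>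
        (\<forall>v\<in>srv N rel disp (j - 1). energy f g x disp j (rel j) \<le> energy f g x disp j v) \<and>
        avail N M g c x rel disp j (disp j) \<and>
        (\<forall>v. avail N M g c x rel disp j v \<longrightarrow>
              ready_le (ready g c x rel j (disp j)) (ready g c x rel j v)))"

end

theory Submission
  imports Defs
begin

theorem lemma1:
  fixes N M :: nat and f g c x :: real and rel disp :: "nat \<Rightarrow> nat"
  assumes hN: "N \<ge> 1"
    and hg: "g > 0" and hf: "f > 0" and hc: "c \<ge> 0" and hfg: "2 * g < f"
    and hM: "M = N + nat \<lceil>(c + 2 * g) / (f - 2 * g) * real N\<rceil>"
    and hx: "x = (f - 2 * g) / real N"
    and run: "horr_run N M f g c rel disp"
    and label: "inj_on rel {1..N}" "\<forall>i\<in>{1..N}. rel i \<in> {0..<N}"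
  shows "\<forall>i\<in>{1..N}. \<forall>k\<ge>1. \<exists>T::nat. T \<ge> 1 \<and> rel T = rel i \<and>
           card {j. 1 \<le> j \<and> j < T \<and> rel j = rel i} = k - 1 \<and>
           real T * x = (real i + real (k - 1) * real N
                         + real (k - 1) * of_int \<lceil>(2 * g + c) / x\<rceil>) * x"
proof -
  have xpos: "x > 0" using hx hfg hN by auto
  define L where "L = M - N"
  define P where "P = N + L"
  define C where "C = \<lceil>(2*g+c)/x\<rceil>"
  have hq: "(c + 2*g)/(f - 2*g) * real N = (2*g + c)/x" unfolding hx using hfg hN by (simp add: field_simps)
  have "(2*g+c)/x > 0" using xpos hg hc by auto
  hence Cpos: "C \<ge> 1" unfolding C_def by (simp add: le_ceiling_iff)
  have hML: "M = N + nat C" using hM hq C_def by simp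
  have LC: "int L = C" using hML Cpos L_def by simp
  have Lpos: "L \<ge> 1" using LC Cpos by simp
  have MP: "M = P" using hML L_def P_def by simp
  have NP: "N < P" using Lpos P_def by simp
  have keyL: "(2*g+c \<le> real d * x) \<longleftrightarrow> L \<le> d" for d :: nat
  proof -
    have "(2*g+c \<le> real d * x) \<longleftrightarrow> (2*g+c)/x \<le> real d" using xpos by (simp add: field_simps)
    also have "\<dots> \<longleftrightarrow> C \<le> int d" unfolding C_def by (simp add: ceiling_le_iff)
    also have "\<dots> \<longleftrightarrow> L \<le> d" unfolding LC[symmetric] by simp
    finally show ?thesis .
  qed
  have hxx: "hx N f g = x" using hx hx_def by simp
  have runall: "\<forall>j\<ge>1.
        rel j \<in> srv N rel disp (j - 1) \<and>
        (\<forall>v\<in>srv N rel disp (j - 1). energy f g x disp j (rel j) \<le> energy f g x disp j v) \<and>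
        avail N M g c x rel disp j (disp j) \<and>
        (\<forall>v. avail N M g c x rel disp j v \<longrightarrow>
              ready_le (ready g c x rel j (disp j)) (ready g c x rel j v))"
    using run unfolding horr_run_def Let_def hxx .
  have R1: "rel j \<in> srv N rel disp (j - 1)" if "j \<ge> 1" for j
    using conjunct1[OF runall[rule_format, OF that]] .
  have R2: "\<forall>v\<in>srv N rel disp (j - 1). energy f g x disp j (rel j) \<le> energy f g x disp j v" if "j \<ge> 1" for j
    using conjunct1[OF conjunct2[OF runall[rule_format, OF that]]] .
  have R3: "avail N M g c x rel disp j (disp j)" if "j \<ge> 1" for j
    using conjunct1[OF conjunct2[OF conjunct2[OF runall[rule_format, OF that]]]] .
  have dispM: "disp j < M" if "j \<ge> 1" for j using R3[OF that] unfolding avail_def by simp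
  have dispnot: "disp j \<notin> srv N rel disp (j - 1)" if "j \<ge> 1" for j using R3[OF that] unfolding avail_def by simp
  have avail_rel: "L + r \<le> s" if "1 \<le> r" "r < s" "rel r = disp s" for r s
  proof -
    define R where "R = {r. 1 \<le> r \<and> r < s \<and> rel r = disp s}"
    have fin: "finite R" unfolding R_def by (rule finite_subset[of _ "{..<s}"]) auto
    have rR: "r \<in> R" using that R_def by auto
    hence ne: "R \<noteq> {}" by auto
    have rle: "r \<le> Max R" using fin rR by simp
    have "Max R \<in> R" using fin ne by (rule Max_in)
    hence Mlt: "Max R < s" unfolding R_def by simp
    have "ready g c x rel s (disp s) = Some (real (Max R) * x + g + c)"
      unfolding ready_def Let_def R_def[symmetric] using ne by simp
    moreover have "case ready g c x rel s (disp s) of None \<Rightarrow> True | Some s' \<Rightarrow> s' + g \<le> real s * x"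
      using R3[of s, unfolded avail_def] that by linarith
    ultimately have "real (Max R) * x + g + c + g \<le> real s * x" by simp
    hence "2*g+c \<le> real (s - Max R) * x" using Mlt by (simp add: of_nat_diff algebra_simps)
    hence "L \<le> s - Max R" using keyL by blast
    thus ?thesis using rle Mlt by linarith
  qed
  have Ppos: "P > 0" using NP by simp
  define e where "e r = (if r \<le> N then rel r else disp (r - N))" for r
  define E where "E r = e ((r - 1) mod P + 1)" for r
  have Esmall: "E r = e r" if "1 \<le> r" "r \<le> P" for r
  proof -
    have "(r - 1) mod P = r - 1" using that by simp
    thus ?thesis unfolding E_def using that by simp
  qed
  have Eper: "E (r + P) = E r" if "1 \<le> r" for r
  proof -
    have "r + P - 1 = (r - 1) + P" using that by simp
    thus ?thesis unfolding E_def by simp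
  qed
  have modne: "(a - 1) mod P \<noteq> (b - 1) mod P" if "1 \<le> a" "a < b" "b - a < P" for a b
  proof
    assume "(a - 1) mod P = (b - 1) mod P"
    hence "P dvd (b - 1) - (a - 1)" using mod_eq_dvd_iff_nat[of "a-1" "b-1" P] that by simp
    moreover have "(b-1) - (a-1) = b - a" using that by simp
    ultimately have "P dvd b - a" by simp
    moreover have "b - a > 0" using that by simp
    ultimately have "P \<le> b - a" by (simp add: dvd_imp_le)
    thus False using that by simp
  qed
  have eM: "e ` {1..P} \<subseteq> {..<M}"
  proof
    fix u assume "u \<in> e ` {1..P}"
    then obtain r where r: "r \<in> {1..P}" "u = e r" by blast
    show "u \<in> {..<M}"
    proof (cases "r \<le> N")
      case True
      hence "rel r < N" using r label(2) by auto
      thus ?thesis using r True hML unfolding e_def by auto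
    next
      case False thus ?thesis using r dispM[of "r - N"] unfolding e_def by auto
    qed
  qed
  have inj_surj: "e ` {1..P} = {..<M}" if "inj_on e {1..P}"
  proof (rule card_subset_eq)
    show "finite {..<M}" by simp
    show "e ` {1..P} \<subseteq> {..<M}" by (rule eM)
    show "card (e ` {1..P}) = card {..<M}" using card_image[OF that] MP by simp
  qed
  have Ewin: "E ` {a..<a+P} = e ` {1..P}" if "1 \<le> a" for a
  proof -
    define h where "h r = (r - 1) mod P + 1" for r
    have "h ` {a..<a+P} = {1..P}"
    proof (rule card_subset_eq)
      show "finite {1..P}" by simp
      show "h ` {a..<a+P} \<subseteq> {1..P}" unfolding h_def using Ppos by (auto simp: Suc_le_eq)
      have "inj_on h {a..<a+P}"
      proof (rule inj_onI)
        fix r r' assume rr: "r \<in> {a..<a+P}" "r' \<in> {a..<a+P}" "h r = h r'"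
        show "r = r'"
        proof (rule ccontr)
          assume "r \<noteq> r'"
          hence "r < r' \<or> r' < r" by auto
          moreover have "(r - 1) mod P = (r' - 1) mod P" using rr(3) unfolding h_def by simp
          moreover have "r' - r < P" "r - r' < P" using rr(1,2) by auto
          moreover have "1 \<le> r" "1 \<le> r'" using rr(1,2) that by auto
          ultimately show False using modne[of r r'] modne[of r' r] by auto
        qed
      qed
      thus "card (h ` {a..<a+P}) = card {1..P}" using card_image by fastforce
    qed
    moreover have "E ` {a..<a+P} = e ` (h ` {a..<a+P})" unfolding E_def h_def by (simp add: image_image)
    ultimately show ?thesis by simp
  qed
  define Inv where "Inv j \<longleftrightarrow> (\<forall>r. 1 \<le> r \<and> r \<le> j \<longrightarrow> rel r = E r) \<and>
     (\<forall>m. 1 \<le> m \<and> m \<le> j \<longrightarrow> disp m = E (m + N)) \<and> inj_on e {1..N + min j L} \<and>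
     srv N rel disp j = E ` {j+1..j+N}" for j
  have injw: "E a \<noteq> E b" if "inj_on e {1..N + min j L}" "1 \<le> a" "a < b" "b \<le> j + N" "b - a < P" for j a b
  proof -
    have gen: "(r - 1) mod P + 1 \<in> {1..N + min j L}" if "1 \<le> r" "r \<le> j + N" for r
    proof (cases "L \<le> j")
      case True
      have "(r - 1) mod P < P" using Ppos by simp
      thus ?thesis using True P_def by auto
    next
      case False
      have "(r - 1) mod P = r - 1" using that False P_def by simp
      thus ?thesis using that False by auto
    qed
    have "(a - 1) mod P + 1 \<noteq> (b - 1) mod P + 1" using modne[of a b] that by simp
    thus ?thesis unfolding E_def using inj_onD[OF that(1)] gen[of a] gen[of b] that by auto
  qed
  have relimg: "rel ` {1..N} = {0..<N}"
  proof (rule card_subset_eq)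
    show "finite {0..<N}" by simp
    show "rel ` {1..N} \<subseteq> {0..<N}" using label(2) by auto
    show "card (rel ` {1..N}) = card {0..<N}" using card_image[OF label(1)] by simp
  qed
  have Inv0: "Inv 0"
  proof -
    have "inj_on e {1..N}"
      using label(1) inj_on_cong[of "{1..N}" e rel] unfolding e_def by auto
    moreover have "E ` {1..N} = {0..<N}"
    proof -
      have "E ` {1..N} = rel ` {1..N}"
        using Esmall NP unfolding e_def by (intro image_cong) auto
      thus ?thesis using relimg by simp
    qed
    ultimately show ?thesis unfolding Inv_def by simp
  qed
  have step: "Inv (Suc j)" if "Inv j" for j
  proof -
    define s where "s = Suc j"
    from that have I1: "\<And>r. 1 \<le> r \<Longrightarrow> r \<le> j \<Longrightarrow> rel r = E r"
      and I2: "\<And>m. 1 \<le> m \<Longrightarrow> m \<le> j \<Longrightarrow> disp m = E (m + N)"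
      and I3: "inj_on e {1..N + min j L}"
      and I4: "srv N rel disp j = E ` {j+1..j+N}" unfolding Inv_def by auto
    have w: "E a \<noteq> E b" if "1 \<le> a" "a < b" "b \<le> j + N" "b - a < P" for a b
      using injw[OF I3 that] .
    have s1: "s \<ge> 1" and sj: "s - 1 = j" unfolding s_def by auto
    have srvj: "srv N rel disp (s - 1) = E ` {s..j+N}" using I4 sj s_def by simp
    have rels: "rel s = E s"
    proof (cases "s \<le> N")
      case True thus ?thesis using Esmall[of s] NP s1 unfolding e_def by simp
    next
      case False
      have en: "energy f g x disp s (E r) = f - g - real (s + N - r) * x" if rin: "r \<in> {s..j+N}" for r
      proof -
        define D where "D = {m. 1 \<le> m \<and> m < s \<and> disp m = E r}"
        have "disp (r - N) = E (r - N + N)" using I2[of "r - N"] rin False s_def by auto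
        hence rN: "r - N \<in> D" using rin False unfolding D_def s_def by auto
        have fin: "finite D" unfolding D_def by (rule finite_subset[of _ "{..<s}"]) auto
        have ub: "m \<le> r - N" if "m \<in> D" for m
        proof (rule ccontr)
          assume "\<not> m \<le> r - N"
          hence a: "r < m + N" by simp
          have b: "m \<le> j" "1 \<le> m" "disp m = E r" using \<open>m\<in>D\<close> unfolding D_def s_def by auto
          have "E r \<noteq> E (m + N)" using w[of r "m+N"] a b rin s_def NP by auto
          thus False using I2[of m] b by simp
        qed
        have "Max D = r - N" using fin rN ub by (intro Max_eqI) auto
        moreover have "D \<noteq> {}" using rN by auto
        ultimately have "energy f g x disp s (E r) = f - g - real (s - (r - N)) * x"
          unfolding energy_def Let_def D_def[symmetric] by simp
        moreover have "s - (r - N) = s + N - r" using rin False by auto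
        ultimately show ?thesis by simp
      qed
      obtain r0 where r0: "r0 \<in> {s..j+N}" "rel s = E r0" using R1[OF s1] srvj by auto
      have sin: "s \<in> {s..j+N}" using hN s_def by auto
      have "energy f g x disp s (rel s) \<le> energy f g x disp s (E s)"
        using R2[OF s1] srvj sin by auto
      hence "f - g - real (s + N - r0) * x \<le> f - g - real (s + N - s) * x"
        using en[OF r0(1)] en[OF sin] r0(2) by simp
      hence "real (s + N - s) * x \<le> real (s + N - r0) * x" by simp
      hence "real (s + N - s) \<le> real (s + N - r0)" using xpos by simp
      hence "N \<le> s + N - r0" by simp
      moreover have "r0 \<le> j + N" "s \<le> r0" using r0(1) by auto
      ultimately have "r0 \<le> s" using hN s_def by arith
      thus ?thesis using r0 by auto
    qed
    have dn: "disp s \<notin> E ` {s..j+N}" using dispnot[OF s1] srvj by simp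
    have dM: "disp s < M" using dispM[OF s1] .
    have ar: "L + r \<le> s" if "1 \<le> r" "r < s" "rel r = disp s" for r using avail_rel that .
    have disps: "disp s = E (s + N) \<and> (s \<le> L \<longrightarrow> inj_on e {1..N + s})"
    proof (cases "s \<le> L")
      case True
      have jL: "min j L = j" using True s_def by simp
      have nin: "disp s \<notin> e ` {1..N + j}"
      proof
        assume "disp s \<in> e ` {1..N+j}"
        then obtain r where r: "r \<in> {1..N+j}" "disp s = e r" by auto
        have Er: "E r = e r" using Esmall[of r] r True s_def P_def by auto
        show False
        proof (cases "r \<le> j")
          case True
          hence "rel r = disp s" using I1[of r] r Er by auto
          hence "L + r \<le> s" using ar[of r] r True s_def by auto
          thus False using \<open>s \<le> L\<close> r by auto
        next
          case False
          hence "r \<in> {s..j+N}" using r s_def by auto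
          hence "E r \<in> E ` {s..j+N}" by (rule imageI)
          thus False using dn r Er by simp
        qed
      qed
      have es: "e (N + s) = disp s" unfolding e_def using s_def by simp
      have "E (s + N) = e (N + s)" using Esmall[of "s+N"] True P_def hN by (simp add: add.commute)
      moreover have "inj_on e {1..N+s}"
      proof -
        have "{1..N+s} = insert (N+s) {1..N+j}" using s_def by auto
        moreover have "e (N+s) \<notin> e ` ({1..N+j} - {N+s})" using nin es by auto
        ultimately show ?thesis using I3 jL by simp
      qed
      ultimately show ?thesis using es by simp
    next
      case False
      have jL: "min j L = L" using False s_def by simp
      have inj: "inj_on e {1..P}" using I3 jL P_def by simp
      have a1: "1 \<le> s - L" using False by simp
      have sL: "L < s" using False by simp
      have "disp s \<in> E ` {s - L..<s - L + P}" using Ewin[OF a1] inj_surj[OF inj] dM by auto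
      then obtain r where r: "r \<in> {s - L..<s - L + P}" "disp s = E r" by auto
      have "r = s - L"
      proof (rule ccontr)
        assume ne: "r \<noteq> s - L"
        show False
        proof (cases "r \<le> j")
          case True
          have "rel r = disp s" using I1[of r] r True a1 by auto
          hence "L + r \<le> s" using ar[of r] r True a1 s_def by auto
          thus False using ne r by auto
        next
          case False
          hence "r \<in> {s..j+N}" using r s_def P_def sL by auto
          hence "E r \<in> E ` {s..j+N}" by (rule imageI)
          thus False using dn r by simp
        qed
      qed
      moreover have "E (s + N) = E (s - L)"
      proof -
        have "s + N = (s - L) + P" using False P_def by simp
        thus ?thesis using Eper[OF a1] by simp
      qed
      ultimately show ?thesis using r False by simp
    qed
    have srvs: "srv N rel disp s = E ` {s+1..s+N}"
    proof -
      have "srv N rel disp s = insert (disp s) (srv N rel disp j - {rel s})" unfolding s_def by simp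
      also have "\<dots> = insert (E (s+N)) (E ` {s..j+N} - {E s})" using disps rels I4 s_def by simp
      also have "\<dots> = E ` {s+1..s+N}"
      proof -
        have "E ` {s..j+N} - {E s} = E ` {s+1..j+N}"
        proof
          show "E ` {s..j+N} - {E s} \<subseteq> E ` {s+1..j+N}"
          proof
            fix y assume "y \<in> E ` {s..j+N} - {E s}"
            then obtain r where r: "r \<in> {s..j+N}" "y = E r" "y \<noteq> E s" by auto
            hence "r \<noteq> s" by auto
            hence "r \<in> {s+1..j+N}" "y = E r" using r by auto
            thus "y \<in> E ` {s+1..j+N}" by auto
          qed
          show "E ` {s+1..j+N} \<subseteq> E ` {s..j+N} - {E s}"
          proof
            fix y assume "y \<in> E ` {s+1..j+N}"
            then obtain r where r: "r \<in> {s+1..j+N}" "y = E r" by auto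
            have "r - s < P" using r s_def NP by auto
            hence "E s \<noteq> E r" using w[of s r] r s_def by auto
            thus "y \<in> E ` {s..j+N} - {E s}" using r by auto
          qed
        qed
        moreover have "{s+1..s+N} = insert (s+N) {s+1..j+N}" using s_def hN by auto
        ultimately show ?thesis by simp
      qed
      finally show ?thesis .
    qed
    have c1: "\<forall>r. 1 \<le> r \<and> r \<le> Suc j \<longrightarrow> rel r = E r"
      using I1 rels s_def le_Suc_eq by auto
    have c2: "\<forall>m. 1 \<le> m \<and> m \<le> Suc j \<longrightarrow> disp m = E (m + N)"
      using I2 disps s_def le_Suc_eq by auto
    have c3: "inj_on e {1..N + min (Suc j) L}"
    proof (cases "s \<le> L")
      case True thus ?thesis using disps s_def by simp
    next
      case False
      hence "min (Suc j) L = min j L" using s_def by simp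
      thus ?thesis using I3 by simp
    qed
    show ?thesis unfolding Inv_def using c1 c2 c3 srvs s_def by simp
  qed
  have Invall: "Inv j" for j by (induction j) (use Inv0 step in auto)
  have relE: "rel j = E j" if "j \<ge> 1" for j using Invall[of j] that unfolding Inv_def by auto
  have injP: "inj_on e {1..P}" using Invall[of L] unfolding Inv_def P_def by simp
  have Eeq: "E a = E b \<longleftrightarrow> (a - 1) mod P = (b - 1) mod P" for a b
  proof -
    have "(a - 1) mod P + 1 \<in> {1..P}" "(b - 1) mod P + 1 \<in> {1..P}" using Ppos by (auto simp: Suc_le_eq)
    thus ?thesis unfolding E_def using inj_on_eq_iff[OF injP] by auto
  qed
  show ?thesis
  proof (intro ballI allI impI)
    fix i k :: nat assume i: "i \<in> {1..N}" and k: "k \<ge> 1"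
    define T where "T = i + (k - 1) * P"
    have T1: "T \<ge> 1" using i T_def by auto
    have iP: "(i - 1) mod P = i - 1" using i NP by auto
    have relT: "rel T = rel i"
    proof -
      have "T - 1 = (i - 1) + (k - 1) * P" using i T_def by auto
      hence "(T - 1) mod P = (i - 1) mod P" by simp
      thus ?thesis using relE[OF T1] relE[of i] i Eeq by auto
    qed
    have S: "{j. 1 \<le> j \<and> j < T \<and> rel j = rel i} = (\<lambda>l. i + l * P) ` {..<k - 1}"
    proof
      show "{j. 1 \<le> j \<and> j < T \<and> rel j = rel i} \<subseteq> (\<lambda>l. i + l * P) ` {..<k - 1}"
      proof
        fix j assume "j \<in> {j. 1 \<le> j \<and> j < T \<and> rel j = rel i}"
        hence j: "1 \<le> j" "j < T" "rel j = rel i" by auto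
        have "E j = E i" using j relE[of j] relE[of i] i by auto
        hence jm: "(j - 1) mod P = i - 1" using Eeq iP by simp
        define l where "l = (j - 1) div P"
        have "l * P + (j - 1) mod P = j - 1" unfolding l_def by (rule div_mult_mod_eq)
        hence jl: "j = i + l * P" using jm j i by auto
        hence "l * P < (k - 1) * P" using j T_def by simp
        hence "l < k - 1" by (simp add: mult_less_cancel2)
        thus "j \<in> (\<lambda>l. i + l * P) ` {..<k - 1}" using jl by auto
      qed
      show "(\<lambda>l. i + l * P) ` {..<k - 1} \<subseteq> {j. 1 \<le> j \<and> j < T \<and> rel j = rel i}"
      proof
        fix j assume "j \<in> (\<lambda>l. i + l * P) ` {..<k - 1}"
        then obtain l where l: "l < k - 1" "j = i + l * P" by auto
        have j1: "1 \<le> j" using l i by auto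
        have "l * P < (k - 1) * P" using l Ppos by simp
        hence jT: "j < T" using l T_def by simp
        have "j - 1 = (i - 1) + l * P" using l i by auto
        hence "(j - 1) mod P = (i - 1) mod P" by simp
        hence "rel j = rel i" using relE[OF j1] relE[of i] i Eeq by auto
        thus "j \<in> {j. 1 \<le> j \<and> j < T \<and> rel j = rel i}" using j1 jT by auto
      qed
    qed
    have injl: "inj_on (\<lambda>l. i + l * P) {..<k - 1}" using Ppos by (intro inj_onI) simp
    have card: "card {j. 1 \<le> j \<and> j < T \<and> rel j = rel i} = k - 1"
      using S card_image[OF injl] by simp
    have "real T * x = (real i + real (k - 1) * real N + real (k - 1) * of_int \<lceil>(2 * g + c) / x\<rceil>) * x"
    proof -
      have "of_int \<lceil>(2 * g + c) / x\<rceil> = real L" using LC C_def by (metis of_int_of_nat_eq)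
      moreover have "real T = real i + real (k - 1) * real P" unfolding T_def by simp
      moreover have "real P = real N + real L" unfolding P_def by simp
      ultimately show ?thesis by (simp add: distrib_left distrib_right)
    qed
    thus "\<exists>T::nat. T \<ge> 1 \<and> rel T = rel i \<and>
           card {j. 1 \<le> j \<and> j < T \<and> rel j = rel i} = k - 1 \<and>
           real T * x = (real i + real (k - 1) * real N
                         + real (k - 1) * of_int \<lceil>(2 * g + c) / x\<rceil>) * x"
      using T1 relT card by blast
  qed
qed

end
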